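(* Let $X=X(K,U)$ be an OT-manifold and $T=\mathbb{C}^d/\Lambda$ a complex torus. Then every holomorphic map $f:T\to X$ is constant.
   Context: Let $K$ be a number field with $s>0$ real embeddings $\sigma_1,\dots,\sigma_s$ and $2t>0$ non-real complex embeddings $\tau_1,\bar\tau_1,\dots,\tau_t,\bar\tau_t$; $\mathcal{O}_K$ its ring of integers, $\mathcal{O}_K^{*,+}$ its totally positive units, $\mathbb{H}$ the upper half-plane. The group $U\ltimes\mathcal{O}_K$ ($U\subset\mathcal{O}_K^{*,+}$) acts on $\mathbb{H}^s\times\mathbb{C}^t$: $\zeta\in\mathcal{O}_K$ by translation by $(\sigma_1(\zeta),\dots,\sigma_s(\zeta),\tau_1(\zeta),\dots,\tau_t(\zeta))$ and $\xi\in U$ by coordinatewise multiplication by $(\sigma_1(\xi),\dots,\sigma_s(\xi),\tau_1(\xi),\dots,\tau_t(\xi))$. $U$ is admissible if this action is properly discontinuous and cocompact; the OT-manifold is $X(K,U)=(\mathbb{H}^s\times\mathbb{C}^t)/(U\ltimes\mathcal{O}_K)$. *)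

theory Defs
  imports "HOL-Analysis.Analysis" "HOL-Computational_Algebra.Polynomial"
begin

definition subfield_C :: "complex set \<Rightarrow> bool" where
  "subfield_C K \<longleftrightarrow> 0 \<in> K \<and> 1 \<in> K \<and>
     (\<forall>x\<in>K. \<forall>y\<in>K. x + y \<in> K \<and> x - y \<in> K \<and> x * y \<in> K) \<and>
     (\<forall>x\<in>K. x \<noteq> 0 \<longrightarrow> inverse x \<in> K)"

definition number_field :: "complex set \<Rightarrow> bool" where
  "number_field K \<longleftrightarrow> subfield_C K \<and>
     (\<exists>B. finite B \<and> B \<subseteq> K \<and> K \<subseteq> {\<Sum>b\<in>B. of_rat (q b) * b | q. True})"

definition ring_of_integers :: "complex set \<Rightarrow> complex set" where
  "ring_of_integers K = {x \<in> K. algebraic_int x}"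

text \<open>Field embeddings K -> C (ring homomorphisms on K, only their values on K matter).\<close>
definition field_embedding :: "complex set \<Rightarrow> (complex \<Rightarrow> complex) \<Rightarrow> bool" where
  "field_embedding K \<sigma> \<longleftrightarrow> \<sigma> 1 = 1 \<and>
     (\<forall>x\<in>K. \<forall>y\<in>K. \<sigma> (x + y) = \<sigma> x + \<sigma> y \<and> \<sigma> (x * y) = \<sigma> x * \<sigma> y)"

text \<open>Embedding data: the coordinates are indexed by a finite type 'm; \<open>emb i\<close> for
  \<open>i \<in> R\<close> are the s real embeddings, \<open>emb i\<close> for \<open>i \<notin> R\<close> are representatives
  tau_1..tau_t of the t pairs of complex conjugate non-real embeddings.\<close>
definition embedding_data :: "complex set \<Rightarrow> 'm set \<Rightarrow> ('m \<Rightarrow> complex \<Rightarrow> complex) \<Rightarrow> bool" where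
  "embedding_data K R emb \<longleftrightarrow>
     (\<forall>i. field_embedding K (emb i)) \<and>
     (\<forall>i\<in>R. \<forall>x\<in>K. emb i x \<in> \<real>) \<and>
     (\<forall>i. i \<notin> R \<longrightarrow> (\<exists>x\<in>K. emb i x \<notin> \<real>)) \<and>
     (\<forall>i j. i \<noteq> j \<longrightarrow> (\<exists>x\<in>K. emb i x \<noteq> emb j x) \<and> (\<exists>x\<in>K. emb i x \<noteq> cnj (emb j x))) \<and>
     (\<forall>\<sigma>. field_embedding K \<sigma> \<longrightarrow>
        (\<exists>i. \<forall>x\<in>K. \<sigma> x = emb i x) \<or> (\<exists>i. i \<notin> R \<and> (\<forall>x\<in>K. \<sigma> x = cnj (emb i x))))"

definition totally_positive_units ::
    "complex set \<Rightarrow> 'm set \<Rightarrow> ('m \<Rightarrow> complex \<Rightarrow> complex) \<Rightarrow> complex set" where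
  "totally_positive_units K R emb =
     {u \<in> ring_of_integers K. inverse u \<in> ring_of_integers K \<and>
        (\<forall>i\<in>R. emb i u \<in> \<real> \<and> Re (emb i u) > 0)}"

definition mult_subgroup :: "complex set \<Rightarrow> bool" where
  "mult_subgroup U \<longleftrightarrow> 1 \<in> U \<and> (\<forall>u\<in>U. \<forall>v\<in>U. u * v \<in> U) \<and> (\<forall>u\<in>U. inverse u \<in> U)"

text \<open>H^s x C^t, coordinates in R lie in the upper half plane.\<close>
definition ot_domain :: "'m::finite set \<Rightarrow> (complex ^ 'm) set" where
  "ot_domain R = {z. \<forall>i\<in>R. Im (z $ i) > 0}"

definition ot_act :: "('m::finite \<Rightarrow> complex \<Rightarrow> complex) \<Rightarrow> complex \<Rightarrow> complex \<Rightarrow> complex ^ 'm \<Rightarrow> complex ^ 'm" where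
  "ot_act emb u a z = (\<chi> i. emb i u * z $ i + emb i a)"

definition ot_group :: "complex set \<Rightarrow> complex set \<Rightarrow> (complex \<times> complex) set" where
  "ot_group K U = {(u, a). u \<in> U \<and> a \<in> ring_of_integers K}"

definition admissible :: "complex set \<Rightarrow> 'm::finite set \<Rightarrow> ('m \<Rightarrow> complex \<Rightarrow> complex) \<Rightarrow> complex set \<Rightarrow> bool" where
  "admissible K R emb U \<longleftrightarrow>
     mult_subgroup U \<and> U \<subseteq> totally_positive_units K R emb \<and>
     \<comment> \<open>properly discontinuous\<close>
     (\<forall>C. compact C \<and> C \<subseteq> ot_domain R \<longrightarrow>
        finite {(u, a) \<in> ot_group K U. ot_act emb u a ` C \<inter> C \<noteq> {}}) \<and>
     \<comment> \<open>cocompact\<close>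
     (\<exists>C. compact C \<and> C \<subseteq> ot_domain R \<and>
        (\<Union>(u, a)\<in>ot_group K U. ot_act emb u a ` C) = ot_domain R)"

text \<open>Points of X(K,U) are orbits of points of H^s x C^t.\<close>
definition ot_orbit :: "complex set \<Rightarrow> ('m::finite \<Rightarrow> complex \<Rightarrow> complex) \<Rightarrow> complex set \<Rightarrow> complex ^ 'm \<Rightarrow> (complex ^ 'm) set" where
  "ot_orbit K emb U z = {ot_act emb u a z | u a. (u, a) \<in> ot_group K U}"

definition full_lattice :: "(complex ^ 'd::finite) set \<Rightarrow> bool" where
  "full_lattice \<Lambda> \<longleftrightarrow> (\<exists>B. independent B \<and> span B = UNIV \<and>
      \<Lambda> = {\<Sum>b\<in>B. of_int (c b) *\<^sub>R b | c. True})"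

definition holo_on :: "(complex ^ 'n::finite) set \<Rightarrow> (complex ^ 'n \<Rightarrow> complex ^ 'k::finite) \<Rightarrow> bool" where
  "holo_on V g \<longleftrightarrow> open V \<and>
     (\<forall>z\<in>V. \<exists>L. (g has_derivative L) (at z) \<and> (\<forall>c w. L (c *s w) = c *s L w))"

text \<open>A holomorphic map T = C^d/\<Lambda> -> X(K,U), represented as a \<Lambda>-periodic map F from C^d
  to the set of orbits, which locally lifts to a holomorphic map into H^s x C^t.\<close>
definition holo_map_torus_OT ::
    "(complex ^ 'd::finite) set \<Rightarrow> complex set \<Rightarrow> 'm::finite set \<Rightarrow> ('m \<Rightarrow> complex \<Rightarrow> complex) \<Rightarrow> complex set
     \<Rightarrow> (complex ^ 'd \<Rightarrow> (complex ^ 'm) set) \<Rightarrow> bool" where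
  "holo_map_torus_OT \<Lambda> K R emb U F \<longleftrightarrow>
     (\<forall>z l. l \<in> \<Lambda> \<longrightarrow> F (z + l) = F z) \<and>
     (\<forall>z. \<exists>V g. z \<in> V \<and> holo_on V g \<and> g ` V \<subseteq> ot_domain R \<and>
                (\<forall>w\<in>V. F w = ot_orbit K emb U (g w)))"

end

theory Submission
  imports Defs "HOL-Complex_Analysis.Complex_Analysis"
begin


lemma fe_zero: assumes "field_embedding K \<sigma>" "0 \<in> K" shows "\<sigma> 0 = 0"
proof -
  have "\<sigma> (0+0) = \<sigma> 0 + \<sigma> 0" using assms unfolding field_embedding_def by blast
  then show ?thesis by simp
qed

lemma fe_inj:
  assumes fe: "field_embedding K \<sigma>" and sf: "subfield_C K" and x: "x \<in> K" and y: "y \<in> K"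
    and eq: "\<sigma> x = \<sigma> y"
  shows "x = y"
proof (rule ccontr)
  assume ne: "x \<noteq> y"
  have d: "x - y \<in> K" using sf x y unfolding subfield_C_def by blast
  have "\<sigma> ((x - y) + y) = \<sigma> (x - y) + \<sigma> y" using fe d y unfolding field_embedding_def by blast
  with eq have z: "\<sigma> (x - y) = 0" by simp
  have i: "inverse (x - y) \<in> K" using sf d ne unfolding subfield_C_def by auto
  have "\<sigma> ((x - y) * inverse (x - y)) = \<sigma> (x - y) * \<sigma> (inverse (x - y))"
    using fe d i unfolding field_embedding_def by blast
  also have "\<dots> = 0" using z by simp
  finally have "\<sigma> 1 = 0" using ne by simp
  with fe show False unfolding field_embedding_def by simp
qed

lemma fe_nonzero:
  assumes fe: "field_embedding K \<sigma>" and sf: "subfield_C K" and x: "x \<in> K" and ne: "x \<noteq> 0"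
  shows "\<sigma> x \<noteq> 0"
  using fe_inj[OF fe sf x _] fe_zero[OF fe] sf ne unfolding subfield_C_def by metis

lemma group_props:
  assumes nf: "number_field K" and ed: "embedding_data K R emb" and adm: "admissible K R emb U"
    and g: "(u, a) \<in> ot_group K U"
  shows "u \<in> K" "a \<in> K" "\<And>i. i \<in> R \<Longrightarrow> emb i u \<in> \<real>" "\<And>i. i \<in> R \<Longrightarrow> Re (emb i u) > 0"
    "\<And>i. i \<in> R \<Longrightarrow> emb i a \<in> \<real>"
proof -
  have uU: "u \<in> U" and aO: "a \<in> ring_of_integers K" using g unfolding ot_group_def by auto
  have ut: "u \<in> totally_positive_units K R emb" using adm uU unfolding admissible_def by blast
  show uK: "u \<in> K" using ut unfolding totally_positive_units_def ring_of_integers_def by auto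
  show aK: "a \<in> K" using aO unfolding ring_of_integers_def by auto
  show "\<And>i. i \<in> R \<Longrightarrow> emb i u \<in> \<real>" "\<And>i. i \<in> R \<Longrightarrow> Re (emb i u) > 0"
    using ut unfolding totally_positive_units_def by auto
  show "\<And>i. i \<in> R \<Longrightarrow> emb i a \<in> \<real>" using ed aK unfolding embedding_data_def by blast
qed

lemma act_unique:
  assumes nf: "number_field K" and ed: "embedding_data K R emb" and adm: "admissible K R emb U"
    and Rne: "R \<noteq> {}"
    and y: "y \<in> ot_domain R" and g1: "(u, a) \<in> ot_group K U" and g2: "(u', a') \<in> ot_group K U"
    and eq: "\<forall>i\<in>R. ot_act emb u a y $ i = ot_act emb u' a' y $ i"
  shows "u = u' \<and> a = a'"
proof -
  obtain i where i: "i \<in> R" using Rne by blast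
  have sf: "subfield_C K" using nf unfolding number_field_def by blast
  have fe: "field_embedding K (emb i)" using ed unfolding embedding_data_def by blast
  note P1 = group_props[OF nf ed adm g1] and P2 = group_props[OF nf ed adm g2]
  have e: "emb i u * y $ i + emb i a = emb i u' * y $ i + emb i a'"
    using eq i unfolding ot_act_def by simp
  have yi: "Im (y $ i) > 0" using y i unfolding ot_domain_def by blast
  obtain r where r: "emb i u = of_real r" using P1(3)[OF i] by (rule Reals_cases)
  obtain r' where r': "emb i u' = of_real r'" using P2(3)[OF i] by (rule Reals_cases)
  obtain s where s: "emb i a = of_real s" using P1(5)[OF i] by (rule Reals_cases)
  obtain s' where s': "emb i a' = of_real s'" using P2(5)[OF i] by (rule Reals_cases)
  have "Im (emb i u * y $ i + emb i a) = Im (emb i u' * y $ i + emb i a')" using e by simp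
  then have "r * Im (y $ i) = r' * Im (y $ i)" using r r' s s' by simp
  then have "r = r'" using yi by simp
  then have uu: "emb i u = emb i u'" using r r' by simp
  then have "u = u'" using fe_inj[OF fe sf P1(1) P2(1)] by blast
  moreover have "emb i a = emb i a'" using e uu by simp
  then have "a = a'" using fe_inj[OF fe sf P1(2) P2(2)] by blast
  ultimately show ?thesis by blast
qed

lemma act_domain:
  assumes nf: "number_field K" and ed: "embedding_data K R emb" and adm: "admissible K R emb U"
    and y: "y \<in> ot_domain R" and g: "(u, a) \<in> ot_group K U"
  shows "ot_act emb u a y \<in> ot_domain R"
proof -
  note P = group_props[OF nf ed adm g]
  { fix i assume i: "i \<in> R"
    obtain r where r: "emb i u = of_real r" using P(3)[OF i] by (rule Reals_cases)
    obtain s where s: "emb i a = of_real s" using P(5)[OF i] by (rule Reals_cases)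
    have "r > 0" using P(4)[OF i] r by simp
    moreover have "Im (y $ i) > 0" using y i unfolding ot_domain_def by blast
    ultimately have "Im (ot_act emb u a y $ i) > 0" using r s unfolding ot_act_def by simp }
  then show ?thesis unfolding ot_domain_def by blast
qed

lemma act_inj:
  assumes nf: "number_field K" and ed: "embedding_data K R emb" and adm: "admissible K R emb U"
    and Rne: "R \<noteq> {}" and g: "(u, a) \<in> ot_group K U"
    and eq: "ot_act emb u a y = ot_act emb u a y'"
  shows "y = y'"
proof -
  have sf: "subfield_C K" using nf unfolding number_field_def by blast
  note P = group_props[OF nf ed adm g]
  obtain i0 where i0: "i0 \<in> R" using Rne by blast
  have fe0: "field_embedding K (emb i0)" using ed unfolding embedding_data_def by blast
  have "emb i0 u \<noteq> 0" using P(4)[OF i0] by auto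
  then have u0: "u \<noteq> 0" using fe_zero[OF fe0] sf unfolding subfield_C_def by auto
  show ?thesis
  proof (rule vec_eq_iff[THEN iffD2], rule allI)
    fix i
    have fe: "field_embedding K (emb i)" using ed unfolding embedding_data_def by blast
    have "emb i u \<noteq> 0" using fe_nonzero[OF fe sf P(1) u0] .
    moreover have "emb i u * y $ i + emb i a = emb i u * y' $ i + emb i a"
    proof -
      have "ot_act emb u a y $ i = ot_act emb u a y' $ i" using eq by simp
      then show ?thesis unfolding ot_act_def by simp
    qed
    ultimately show "y $ i = y' $ i" by simp
  qed
qed

lemma continuous_act: "continuous_on S (ot_act emb u a)"
  unfolding ot_act_def
  by (intro continuous_on_vec_lambda continuous_intros)

lemma open_domain: "open (ot_domain (R::'m::finite set))"
proof -
  have "ot_domain R = (\<Inter>i\<in>R. {z. 0 < Im (z $ i)})" unfolding ot_domain_def by auto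
  moreover have "open {z::complex^'m. 0 < Im (z $ i)}" for i
    by (intro open_Collect_less continuous_intros)
  ultimately show ?thesis by (auto intro: open_INT)
qed



lemma finite_eps:
  fixes P :: "'a \<Rightarrow> real \<Rightarrow> bool"
  assumes "finite E" "\<forall>x\<in>E. \<exists>e>0. P x e"
    and mono: "\<And>x e e'. 0 < e' \<Longrightarrow> e' \<le> e \<Longrightarrow> P x e \<Longrightarrow> P x e'"
  shows "\<exists>e>0. \<forall>x\<in>E. P x e"
  using assms(1,2)
proof (induction E rule: finite_induct)
  case empty show ?case by (rule exI[of _ "1::real"]) simp
next
  case (insert x F)
  then obtain e1 where e1: "e1 > 0" "\<forall>y\<in>F. P y e1" by auto
  obtain e2 where e2: "e2 > 0" "P x e2" using insert.prems by auto
  have "\<forall>y\<in>F. P y (min e1 e2)"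
  proof
    fix y assume "y \<in> F"
    then have "P y e1" using e1 by blast
    then show "P y (min e1 e2)" using mono[of "min e1 e2" e1 y] e1 e2 by simp
  qed
  moreover have "P x (min e1 e2)" using mono[of "min e1 e2" e2 x] e1 e2 by simp
  ultimately show ?case using e1 e2 by (intro exI[of _ "min e1 e2"]) simp
qed

lemma sep:
  fixes y0 :: "complex ^ 'm::finite"
  assumes nf: "number_field K" and ed: "embedding_data K R emb" and adm: "admissible K R emb U"
    and Rne: "R \<noteq> {}" and y0: "y0 \<in> ot_domain R" and g0: "(u0, a0) \<in> ot_group K U"
  shows "\<exists>e>0. \<forall>y u a. dist y y0 < e \<longrightarrow> (u, a) \<in> ot_group K U \<longrightarrow>
           dist (ot_act emb u a y) (ot_act emb u0 a0 y0) < e \<longrightarrow> u = u0 \<and> a = a0"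
proof -
  define z0 where "z0 = ot_act emb u0 a0 y0"
  have z0D: "z0 \<in> ot_domain R" unfolding z0_def by (rule act_domain[OF nf ed adm y0 g0])
  obtain r1 where r1: "r1 > 0" "cball y0 r1 \<subseteq> ot_domain R"
    using open_domain[of R] y0 unfolding open_contains_cball by blast
  obtain r2 where r2: "r2 > 0" "cball z0 r2 \<subseteq> ot_domain R"
    using open_domain[of R] z0D unfolding open_contains_cball by blast
  define r0 where "r0 = min r1 r2"
  have r0: "r0 > 0" using r1 r2 unfolding r0_def by auto
  define C where "C = cball y0 r0 \<union> cball z0 r0"
  have Cc: "compact C" unfolding C_def by auto
  have CD: "C \<subseteq> ot_domain R" using r1 r2 unfolding C_def r0_def by auto
  define E where "E = {(u, a) \<in> ot_group K U. ot_act emb u a ` C \<inter> C \<noteq> {}}"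
  have finE: "finite E" using adm Cc CD unfolding admissible_def E_def by blast
  define P where "P = (\<lambda>(\<gamma>::complex\<times>complex) e. \<gamma> \<noteq> (u0, a0) \<longrightarrow>
        (\<forall>y. dist y y0 < e \<longrightarrow> dist (ot_act emb (fst \<gamma>) (snd \<gamma>) y) z0 \<ge> e))"
  have "\<forall>\<gamma>\<in>E. \<exists>e>0. P \<gamma> e"
  proof
    fix \<gamma> assume "\<gamma> \<in> E"
    then obtain u a where \<gamma>: "\<gamma> = (u, a)" "(u, a) \<in> ot_group K U" unfolding E_def by auto
    show "\<exists>e>0. P \<gamma> e"
    proof (cases "\<gamma> = (u0, a0)")
      case True then show ?thesis unfolding P_def by (auto intro: exI[of _ 1])
    next
      case False
      have ne: "ot_act emb u a y0 \<noteq> z0"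
      proof
        assume "ot_act emb u a y0 = z0"
        then have "u = u \<and> a = a" by simp
        have "u = u0 \<and> a = a0"
          using act_unique[OF nf ed adm Rne y0 \<gamma>(2) g0] \<open>ot_act emb u a y0 = z0\<close>
          unfolding z0_def by simp
        then show False using False \<gamma> by simp
      qed
      define \<delta> where "\<delta> = dist (ot_act emb u a y0) z0"
      have d0: "\<delta> > 0" using ne unfolding \<delta>_def by simp
      obtain d where d: "d > 0" "\<forall>y. dist y y0 < d \<longrightarrow> dist (ot_act emb u a y) (ot_act emb u a y0) < \<delta>/2"
      proof -
        have "\<forall>x\<in>UNIV. \<forall>e>0. \<exists>d>0. \<forall>x'\<in>UNIV. dist x' x < d \<longrightarrow> dist (ot_act emb u a x') (ot_act emb u a x) < e"
          using continuous_act[of UNIV emb u a] unfolding continuous_on_iff .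
        then have "\<exists>d>0. \<forall>x'\<in>UNIV. dist x' y0 < d \<longrightarrow> dist (ot_act emb u a x') (ot_act emb u a y0) < \<delta>/2"
          using d0 by (meson UNIV_I half_gt_zero)
        then show ?thesis using that by blast
      qed
      show ?thesis
      proof (rule exI[of _ "min d (\<delta>/2)"], intro conjI)
        show "min d (\<delta>/2) > 0" using d d0 by simp
        show "P \<gamma> (min d (\<delta> / 2))" unfolding P_def
        proof (intro impI allI)
          fix y assume y: "dist y y0 < min d (\<delta> / 2)"
          have "dist (ot_act emb u a y) (ot_act emb u a y0) < \<delta>/2" using d y by simp
          moreover have "\<delta> \<le> dist (ot_act emb u a y) (ot_act emb u a y0) + dist (ot_act emb u a y) z0"
            unfolding \<delta>_def by (metis dist_commute dist_triangle)
          ultimately show "min d (\<delta> / 2) \<le> dist (ot_act emb (fst \<gamma>) (snd \<gamma>) y) z0"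
            using \<gamma> by simp
        qed
      qed
    qed
  qed
  moreover have mono: "P x e'" if "0 < e'" "e' \<le> e" "P x e" for x e e'
    unfolding P_def
  proof (intro impI allI)
    fix y assume "x \<noteq> (u0, a0)" "dist y y0 < e'"
    then have "dist (ot_act emb (fst x) (snd x) y) z0 \<ge> e"
      using that(2,3) unfolding P_def by simp
    then show "e' \<le> dist (ot_act emb (fst x) (snd x) y) z0" using that(2) by simp
  qed
  ultimately obtain e1 where e1: "e1 > 0" "\<forall>\<gamma>\<in>E. P \<gamma> e1"
    using finite_eps[OF finE, of P] by blast
  show ?thesis
  proof (rule exI[of _ "min e1 r0"], rule conjI)
    show "min e1 r0 > 0" using e1 r0 by simp
    show "\<forall>y u a. dist y y0 < min e1 r0 \<longrightarrow> (u, a) \<in> ot_group K U \<longrightarrow>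
           dist (ot_act emb u a y) (ot_act emb u0 a0 y0) < min e1 r0 \<longrightarrow> u = u0 \<and> a = a0"
    proof (intro allI impI)
    fix y u a
    assume y: "dist y y0 < min e1 r0" and g: "(u, a) \<in> ot_group K U"
      and dd: "dist (ot_act emb u a y) (ot_act emb u0 a0 y0) < min e1 r0"
    have yC: "y \<in> C" using y unfolding C_def by (auto simp: dist_commute)
    have zC: "ot_act emb u a y \<in> C" using dd unfolding C_def z0_def by (auto simp: dist_commute)
    have "(u, a) \<in> E" unfolding E_def using g yC zC by blast
    then have "P (u, a) e1" using e1 by blast
    then have "(u, a) \<noteq> (u0, a0) \<longrightarrow> dist (ot_act emb u a y) z0 \<ge> e1"
      using y unfolding P_def by simp
    then show "u = u0 \<and> a = a0"
      using dd unfolding z0_def by auto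
  qed
  qed
qed



lemma holo_cont: assumes "holo_on V g" shows "continuous_on V g"
proof -
  have "\<forall>z\<in>V. isCont g z"
    using assms unfolding holo_on_def by (meson has_derivative_continuous)
  then show ?thesis by (rule continuous_at_imp_continuous_on)
qed

lemma orbit_iff: "y \<in> ot_orbit K emb U z \<longleftrightarrow> (\<exists>u a. (u, a) \<in> ot_group K U \<and> y = ot_act emb u a z)"
  unfolding ot_orbit_def by auto

lemma act_in_orbit: "(u, a) \<in> ot_group K U \<Longrightarrow> ot_act emb u a z \<in> ot_orbit K emb U z"
  unfolding ot_orbit_def by blast

lemma id_in_group:
  assumes nf: "number_field K" and adm: "admissible K R emb U"
  shows "(1, 0) \<in> ot_group K U"
proof -
  have "1 \<in> U" using adm unfolding admissible_def mult_subgroup_def by blast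
  moreover have "0 \<in> K" using nf unfolding number_field_def subfield_C_def by blast
  then have "0 \<in> ring_of_integers K" unfolding ring_of_integers_def by simp
  ultimately show ?thesis unfolding ot_group_def by simp
qed

lemma act_id:
  assumes nf: "number_field K" and ed: "embedding_data K R emb"
  shows "ot_act emb 1 0 z = z"
proof -
  have "0 \<in> K" using nf unfolding number_field_def subfield_C_def by blast
  have "emb i 1 = 1 \<and> emb i 0 = 0" for i
  proof -
    have fe: "field_embedding K (emb i)" using ed unfolding embedding_data_def by blast
    then show ?thesis using fe_zero[OF fe \<open>0 \<in> K\<close>] unfolding field_embedding_def by blast
  qed
  then show ?thesis unfolding ot_act_def by (simp add: vec_eq_iff)
qed

lemma in_own_orbit:
  assumes nf: "number_field K" and ed: "embedding_data K R emb" and adm: "admissible K R emb U"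
  shows "z \<in> ot_orbit K emb U z"
proof -
  have "z = ot_act emb 1 0 z" using act_id[OF nf ed, of z] by simp
  then show ?thesis unfolding orbit_iff using id_in_group[OF nf adm] by blast
qed

definition cov_set :: "complex set \<Rightarrow> 'm::finite set \<Rightarrow> (complex ^ 'd::finite \<Rightarrow> (complex ^ 'm) set)
    \<Rightarrow> ((complex ^ 'd) \<times> (complex ^ 'm)) set" where
  "cov_set K R F = {(w, y). y \<in> ot_domain R \<and> y \<in> F w}"

lemma covering:
  fixes F :: "complex ^ 'd::finite \<Rightarrow> (complex ^ 'm::finite) set"
  assumes nf: "number_field K" and ed: "embedding_data K R emb" and adm: "admissible K R emb U"
    and Rne: "R \<noteq> {}" and hol: "holo_map_torus_OT \<Lambda> K R emb U F"
  shows "covering_space (cov_set K R F) fst UNIV"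
proof
  show "continuous_on (cov_set K R F) fst" by (intro continuous_intros)
  have lifts: "\<forall>z. \<exists>V g. z \<in> V \<and> holo_on V g \<and> g ` V \<subseteq> ot_domain R \<and>
                (\<forall>w\<in>V. F w = ot_orbit K emb U (g w))"
    using hol unfolding holo_map_torus_OT_def by blast
  show "fst ` cov_set K R F = UNIV"
  proof (rule set_eqI, rule iffI)
    fix w :: "complex ^ 'd"
    obtain V g where Vg: "w \<in> V" "holo_on V g" "g ` V \<subseteq> ot_domain R"
         "\<forall>w\<in>V. F w = ot_orbit K emb U (g w)" using lifts by blast
    have "(w, g w) \<in> cov_set K R F"
      unfolding cov_set_def using Vg in_own_orbit[OF nf ed adm] by auto
    then show "w \<in> fst ` cov_set K R F" by force
  qed simp
  fix w0 :: "complex ^ 'd"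
  obtain V g where Vg: "w0 \<in> V" "holo_on V g" "g ` V \<subseteq> ot_domain R"
       "\<forall>w\<in>V. F w = ot_orbit K emb U (g w)" using lifts by blast
  have oV: "open V" using Vg(2) unfolding holo_on_def by blast
  have gc: "continuous_on V g" using holo_cont[OF Vg(2)] .
  define sh where "sh = (\<lambda>(u, a). (\<lambda>w. (w, ot_act emb u a (g w))) ` V)"
  define v where "v = sh ` ot_group K U"
  show "\<exists>T. w0 \<in> T \<and> openin (top_of_set UNIV) T \<and>
             (\<exists>v. \<Union>v = cov_set K R F \<inter> fst -` T \<and> (\<forall>u\<in>v. openin (top_of_set (cov_set K R F)) u) \<and>
                  pairwise disjnt v \<and> (\<forall>u\<in>v. \<exists>q. homeomorphism u T fst q))"
  proof (intro exI conjI)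
    show "w0 \<in> V" by fact
    show "openin (top_of_set UNIV) V" using oV by simp
    show "\<Union>v = cov_set K R F \<inter> fst -` V"
    proof (rule set_eqI, rule iffI)
      fix p assume "p \<in> \<Union>v"
      then obtain u a w where p: "(u, a) \<in> ot_group K U" "w \<in> V" "p = (w, ot_act emb u a (g w))"
        unfolding v_def sh_def by auto
      have "ot_act emb u a (g w) \<in> ot_domain R"
        using act_domain[OF nf ed adm _ p(1)] Vg(3) p(2) by blast
      moreover have "ot_act emb u a (g w) \<in> F w" using Vg(4) p(2) act_in_orbit[OF p(1)] by simp
      ultimately show "p \<in> cov_set K R F \<inter> fst -` V" unfolding cov_set_def using p by simp
    next
      fix p assume p: "p \<in> cov_set K R F \<inter> fst -` V"
      then obtain w y where wy: "p = (w, y)" "w \<in> V" "y \<in> F w" unfolding cov_set_def by auto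
      then have "y \<in> ot_orbit K emb U (g w)" using Vg(4) by simp
      then obtain u a where ua: "(u, a) \<in> ot_group K U" "y = ot_act emb u a (g w)"
        unfolding orbit_iff by blast
      then show "p \<in> \<Union>v" unfolding v_def sh_def using wy by force
    qed
    show "\<forall>S\<in>v. openin (top_of_set (cov_set K R F)) S"
    proof
      fix S assume "S \<in> v"
      then obtain u a where ua: "(u, a) \<in> ot_group K U" "S = sh (u, a)" unfolding v_def by auto
      show "openin (top_of_set (cov_set K R F)) S"
        unfolding openin_euclidean_subtopology_iff
      proof (intro conjI ballI)
        show "S \<subseteq> cov_set K R F"
        proof
          fix p assume "p \<in> S"
          then obtain w where p: "w \<in> V" "p = (w, ot_act emb u a (g w))"
            using ua unfolding sh_def by auto
          have "ot_act emb u a (g w) \<in> ot_domain R"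
            using act_domain[OF nf ed adm _ ua(1)] Vg(3) p(1) by blast
          moreover have "ot_act emb u a (g w) \<in> F w" using Vg(4) p(1) act_in_orbit[OF ua(1)] by simp
          ultimately show "p \<in> cov_set K R F" unfolding cov_set_def using p by simp
        qed
        fix p assume "p \<in> S"
        then obtain w1 where p: "w1 \<in> V" "p = (w1, ot_act emb u a (g w1))"
          using ua unfolding sh_def by auto
        have y0: "g w1 \<in> ot_domain R" using Vg(3) p(1) by blast
        obtain e where e: "e > 0" "\<forall>y u' a'. dist y (g w1) < e \<longrightarrow> (u', a') \<in> ot_group K U \<longrightarrow>
           dist (ot_act emb u' a' y) (ot_act emb u a (g w1)) < e \<longrightarrow> u' = u \<and> a' = a"
          using sep[OF nf ed adm Rne y0 ua(1)] by blast
        obtain \<delta> where \<delta>: "\<delta> > 0" "\<forall>w\<in>V. dist w w1 < \<delta> \<longrightarrow> dist (g w) (g w1) < e"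
          using gc p(1) e(1) unfolding continuous_on_iff by blast
        obtain \<rho> where \<rho>: "\<rho> > 0" "ball w1 \<rho> \<subseteq> V" using oV p(1) open_contains_ball by blast
        show "\<exists>\<epsilon>>0. \<forall>x'\<in>cov_set K R F. dist x' p < \<epsilon> \<longrightarrow> x' \<in> S"
        proof (rule exI[of _ "min (min e \<delta>) \<rho>"], intro conjI ballI impI)
          show "min (min e \<delta>) \<rho> > 0" using e \<delta> \<rho> by simp
          fix x' assume x': "x' \<in> cov_set K R F" "dist x' p < min (min e \<delta>) \<rho>"
          obtain w y where wy: "x' = (w, y)" "y \<in> F w" using x'(1) unfolding cov_set_def by auto
          have dw: "dist w w1 < min (min e \<delta>) \<rho>"
            using dist_fst_le[of x' p] x'(2) wy p by simp
          have dy: "dist y (ot_act emb u a (g w1)) < e"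
            using dist_snd_le[of x' p] x'(2) wy p by simp
          have wV: "w \<in> V" using \<rho> dw by (auto simp: dist_commute)
          have "y \<in> ot_orbit K emb U (g w)" using Vg(4) wV wy(2) by simp
          then obtain u' a' where ua': "(u', a') \<in> ot_group K U" "y = ot_act emb u' a' (g w)"
            unfolding orbit_iff by blast
          have "dist (g w) (g w1) < e" using \<delta> wV dw by simp
          then have "u' = u \<and> a' = a" using e(2) ua' dy by blast
          then show "x' \<in> S" using ua ua' wy wV unfolding sh_def by auto
        qed
      qed
    qed
    show "pairwise disjnt v"
      unfolding pairwise_def
    proof (intro ballI impI)
      fix S1 S2 assume S: "S1 \<in> v" "S2 \<in> v" "S1 \<noteq> S2"
      then obtain u1 a1 u2 a2 where g: "(u1, a1) \<in> ot_group K U" "S1 = sh (u1, a1)"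
          "(u2, a2) \<in> ot_group K U" "S2 = sh (u2, a2)" unfolding v_def by auto
      show "disjnt S1 S2"
      proof (rule ccontr)
        assume "\<not> disjnt S1 S2"
        then obtain w w' where ww: "w \<in> V" "w' \<in> V"
          "(w, ot_act emb u1 a1 (g w)) = (w', ot_act emb u2 a2 (g w'))"
          using g unfolding sh_def disjnt_def by auto
        then have "ot_act emb u1 a1 (g w) = ot_act emb u2 a2 (g w)" by auto
        moreover have yD: "g w \<in> ot_domain R" using Vg(3) ww(1) by blast
        ultimately have "u1 = u2 \<and> a1 = a2"
          using act_unique[OF nf ed adm Rne yD g(1) g(3)] by simp
        then show False using S g by simp
      qed
    qed
    show "\<forall>S\<in>v. \<exists>q. homeomorphism S V fst q"
    proof
      fix S assume "S \<in> v"
      then obtain u a where ua: "(u, a) \<in> ot_group K U" "S = sh (u, a)" unfolding v_def by auto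
      have qc: "continuous_on V (\<lambda>w. (w, ot_act emb u a (g w)))"
        by (intro continuous_on_Pair continuous_on_id continuous_on_compose2[OF continuous_act gc]) auto
      show "\<exists>q. homeomorphism S V fst q"
        by (rule exI[of _ "\<lambda>w. (w, ot_act emb u a (g w))"])
           (use ua qc in \<open>auto simp: homeomorphism_def sh_def image_image intro: continuous_intros\<close>)
    qed
  qed
qed



lemma bl_line: "bounded_linear (\<lambda>h::complex. h *s (v::complex ^ 'n::finite))"
proof -
  have "linear (\<lambda>h::complex. h *s v)"
  proof (rule linearI)
    fix b1 b2 :: complex show "(b1 + b2) *s v = b1 *s v + b2 *s v" by (simp add: vec_eq_iff algebra_simps)
  next
    fix r :: real and b :: complex
    have "((r *\<^sub>R b) *s v) $ i = (r *\<^sub>R (b *s v)) $ i" for i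
      by (simp add: vector_scaleR_component mult_scaleR_left)
    then show "(r *\<^sub>R b) *s v = r *\<^sub>R (b *s v)" by (simp add: vec_eq_iff)
  qed
  then show ?thesis using linear_conv_bounded_linear by blast
qed

lemma line_deriv: "((\<lambda>\<zeta>::complex. w0 + \<zeta> *s (v::complex ^ 'n::finite)) has_derivative (\<lambda>h. h *s v)) (at \<zeta>0)"
proof -
  have "((\<lambda>\<zeta>::complex. \<zeta> *s v + w0) has_derivative (\<lambda>h. h *s v)) (at \<zeta>0)"
    by (rule has_derivative_add_const[OF bounded_linear_imp_has_derivative[OF bl_line]])
  then show ?thesis by (simp add: add.commute)
qed

lemma line_holo:
  fixes G :: "complex ^ 'n::finite \<Rightarrow> complex ^ 'm::finite"
  assumes loc: "\<And>z. \<exists>N g c b. z \<in> N \<and> holo_on N g \<and> (\<forall>w\<in>N. G w $ k = c * g w $ k + b)"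
  shows "(\<lambda>\<zeta>. G (w0 + \<zeta> *s v) $ k) holomorphic_on UNIV"
  unfolding holomorphic_on_open[OF open_UNIV]
proof
  fix \<zeta>0 :: complex
  obtain N g c b where Ng: "w0 + \<zeta>0 *s v \<in> N" "holo_on N g" "\<forall>w\<in>N. G w $ k = c * g w $ k + b"
    using loc by blast
  have oN: "open N" using Ng(2) unfolding holo_on_def by blast
  obtain L where L: "(g has_derivative L) (at (w0 + \<zeta>0 *s v))" "\<forall>c w. L (c *s w) = c *s L w"
    using Ng(1,2) unfolding holo_on_def by blast
  have h1: "((g \<circ> (\<lambda>\<zeta>. w0 + \<zeta> *s v)) has_derivative (L \<circ> (\<lambda>h. h *s v))) (at \<zeta>0)"
    by (rule diff_chain_at[OF line_deriv L(1)])
  have h2: "((\<lambda>\<zeta>. (g \<circ> (\<lambda>\<zeta>. w0 + \<zeta> *s v)) \<zeta> $ k) has_derivative (\<lambda>h. (L \<circ> (\<lambda>h. h *s v)) h $ k)) (at \<zeta>0)"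
    by (rule bounded_linear.has_derivative[OF bounded_linear_vec_nth h1])
  have eqf: "(\<lambda>h. (L \<circ> (\<lambda>h. h *s v)) h $ k) = (*) (L v $ k)"
    using L(2) by (auto simp: fun_eq_iff)
  have h3: "((\<lambda>\<zeta>. g (w0 + \<zeta> *s v) $ k) has_field_derivative (L v $ k)) (at \<zeta>0)"
    using h2 unfolding has_field_derivative_def eqf by (simp add: o_def)
  have h4: "((\<lambda>\<zeta>. c * g (w0 + \<zeta> *s v) $ k + b) has_field_derivative (c * L v $ k)) (at \<zeta>0)"
    using DERIV_cmult[OF h3, of c] DERIV_add[OF _ DERIV_const[of b]] by auto
  have oS: "open ((\<lambda>\<zeta>. w0 + \<zeta> *s v) -` N)"
    by (rule open_vimage[OF oN]) (intro continuous_on_add continuous_on_const linear_continuous_on[OF bl_line])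
  have "((\<lambda>\<zeta>. G (w0 + \<zeta> *s v) $ k) has_field_derivative (c * L v $ k)) (at \<zeta>0)"
    by (rule has_field_derivative_transform_within_open[OF h4 oS]) (use Ng in auto)
  then show "\<exists>f'. ((\<lambda>\<zeta>. G (w0 + \<zeta> *s v) $ k) has_field_derivative f') (at \<zeta>0)" by blast
qed

lemma line_const:
  fixes G :: "complex ^ 'n::finite \<Rightarrow> complex ^ 'm::finite"
  assumes loc: "\<And>z. \<exists>N g c b. z \<in> N \<and> holo_on N g \<and> (\<forall>w\<in>N. G w $ k = c * g w $ k + b)"
    and bnd: "bounded (range (\<lambda>w. G w $ k))"
  shows "G w1 $ k = G w0 $ k"
proof -
  let ?f = "\<lambda>\<zeta>. G (w0 + \<zeta> *s (w1 - w0)) $ k"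
  have "?f holomorphic_on UNIV" by (rule line_holo[OF loc])
  moreover have "bounded (range ?f)"
    using bnd by (rule bounded_subset) auto
  ultimately have "?f constant_on UNIV" by (rule Liouville_theorem)
  then obtain y where y: "\<And>x. ?f x = y" unfolding constant_on_def by blast
  have "?f 1 = y" "?f 0 = y" using y by blast+
  then show ?thesis by simp
qed



lemma cayley_const:
  fixes f :: "complex \<Rightarrow> complex"
  assumes hf: "f holomorphic_on UNIV" and im: "\<And>z. Im (f z) > 0"
  shows "f 1 = f 0"
proof -
  have nz: "f z + \<i> \<noteq> 0" for z
  proof
    assume "f z + \<i> = 0"
    then have "Im (f z + \<i>) = 0" by simp
    then show False using im[of z] by simp
  qed
  let ?q = "\<lambda>z. (f z - \<i>) / (f z + \<i>)"
  have hq: "?q holomorphic_on UNIV"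
    by (intro holomorphic_intros hf nz)
  have nb: "norm (?q z) \<le> 1" for z
  proof -
    have "(cmod (f z - \<i>))^2 \<le> (cmod (f z + \<i>))^2"
      using im[of z] unfolding cmod_power2 by (simp add: power2_eq_square algebra_simps)
    then have "cmod (f z - \<i>) \<le> cmod (f z + \<i>)"
      by (rule power2_le_imp_le) simp
    then show ?thesis using nz[of z] by (simp add: norm_divide divide_le_eq_1)
  qed
  have "bounded (range ?q)"
    unfolding bounded_iff using nb by blast
  then have "?q constant_on UNIV" using Liouville_theorem[OF hq] by blast
  then obtain y where y: "\<And>x. ?q x = y" unfolding constant_on_def by blast
  have "?q 1 = ?q 0" using y by simp
  then have "(f 1 - \<i>) * (f 0 + \<i>) = (f 0 - \<i>) * (f 1 + \<i>)"
    using nz[of 1] nz[of 0] by (simp add: field_simps)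
  then have "2 * \<i> * (f 1 - f 0) = 0" by (simp add: algebra_simps)
  then show ?thesis by simp
qed



lemma holo_on_subset: "holo_on V g \<Longrightarrow> open N \<Longrightarrow> N \<subseteq> V \<Longrightarrow> holo_on N g"
  unfolding holo_on_def by blast

theorem main:
  fixes K :: "complex set" and R :: "'m::finite set" and emb :: "'m \<Rightarrow> complex \<Rightarrow> complex"
    and U :: "complex set" and \<Lambda> :: "(complex ^ 'd::finite) set"
    and F :: "complex ^ 'd \<Rightarrow> (complex ^ 'm) set"
  assumes nf: "number_field K"
    and ed: "embedding_data K R emb"
    and Rne: "R \<noteq> {}" and "R \<noteq> UNIV"
    and adm: "admissible K R emb U"
    and lat: "full_lattice \<Lambda>"
    and hol: "holo_map_torus_OT \<Lambda> K R emb U F"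
  shows "\<exists>c. \<forall>z. F z = c"
proof -
  have lifts: "\<forall>z. \<exists>V g. z \<in> V \<and> holo_on V g \<and> g ` V \<subseteq> ot_domain R \<and>
                (\<forall>w\<in>V. F w = ot_orbit K emb U (g w))"
    and per: "\<And>z l. l \<in> \<Lambda> \<Longrightarrow> F (z + l) = F z"
    using hol unfolding holo_map_torus_OT_def by blast+
  note cov = covering[OF nf ed adm Rne hol]
  have sc: "simply_connected (UNIV::(complex ^ 'd) set)"
    by (rule convex_imp_simply_connected) simp
  have fim: "(\<lambda>x. x) \<in> (UNIV::(complex ^ 'd) set) \<rightarrow> UNIV" by simp
  obtain h where h: "continuous_on UNIV h" "h \<in> UNIV \<rightarrow> cov_set K R F" "\<And>y. y \<in> UNIV \<Longrightarrow> fst (h y) = y"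
    by (rule covering_space_lift[OF cov sc locally_path_connected_UNIV continuous_on_id fim]) blast
  define G where "G = (\<lambda>w. snd (h w))"
  have hw: "h w = (w, G w)" for w using h(3)[of w] unfolding G_def by (metis UNIV_I prod.collapse)
  have hcw: "(w, G w) \<in> cov_set K R F" for w using h(2) hw[of w] by (metis UNIV_I funcset_mem)
  have GD: "G w \<in> ot_domain R" for w using hcw[of w] unfolding cov_set_def by simp
  have GF: "G w \<in> F w" for w using hcw[of w] unfolding cov_set_def by simp
  have Gc: "continuous_on UNIV G" unfolding G_def by (intro continuous_intros h(1))
  have locf: "\<exists>N g u a. open N \<and> w0 \<in> N \<and> holo_on N g \<and> g ` N \<subseteq> ot_domain R \<and>
      (\<forall>w\<in>N. F w = ot_orbit K emb U (g w)) \<and> (u, a) \<in> ot_group K U \<and>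
      (\<forall>w\<in>N. G w = ot_act emb u a (g w))" for w0
  proof -
    obtain V g where Vg: "w0 \<in> V" "holo_on V g" "g ` V \<subseteq> ot_domain R"
       "\<forall>w\<in>V. F w = ot_orbit K emb U (g w)" using lifts by blast
    have oV: "open V" using Vg(2) unfolding holo_on_def by blast
    have gc: "continuous_on V g" using holo_cont[OF Vg(2)] .
    have "G w0 \<in> ot_orbit K emb U (g w0)" using GF[of w0] Vg(1,4) by simp
    then obtain u a where ua: "(u, a) \<in> ot_group K U" "G w0 = ot_act emb u a (g w0)"
      unfolding orbit_iff by blast
    have y0: "g w0 \<in> ot_domain R" using Vg(1,3) by blast
    obtain e where e: "e > 0" "\<forall>y u' a'. dist y (g w0) < e \<longrightarrow> (u', a') \<in> ot_group K U \<longrightarrow>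
           dist (ot_act emb u' a' y) (ot_act emb u a (g w0)) < e \<longrightarrow> u' = u \<and> a' = a"
      using sep[OF nf ed adm Rne y0 ua(1)] by blast
    obtain d1 where d1: "d1 > 0" "\<forall>w\<in>V. dist w w0 < d1 \<longrightarrow> dist (g w) (g w0) < e"
      using gc Vg(1) e(1) unfolding continuous_on_iff by blast
    obtain d2 where d2: "d2 > 0" "\<forall>w\<in>UNIV. dist w w0 < d2 \<longrightarrow> dist (G w) (G w0) < e"
      using Gc e(1) unfolding continuous_on_iff by blast
    obtain \<rho> where \<rho>: "\<rho> > 0" "ball w0 \<rho> \<subseteq> V" using oV Vg(1) open_contains_ball by blast
    define N where "N = ball w0 (min (min d1 d2) \<rho>)"
    have NV: "N \<subseteq> V" using \<rho> unfolding N_def by auto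
    show ?thesis
    proof (intro exI conjI)
      show "open N" "w0 \<in> N" unfolding N_def using d1 d2 \<rho> by auto
      show "holo_on N g" using holo_on_subset[OF Vg(2) \<open>open N\<close> NV] .
      show "g ` N \<subseteq> ot_domain R" using NV Vg(3) by blast
      show "\<forall>w\<in>N. F w = ot_orbit K emb U (g w)" using NV Vg(4) by blast
      show "(u, a) \<in> ot_group K U" by fact
      show "\<forall>w\<in>N. G w = ot_act emb u a (g w)"
      proof
        fix w assume wN: "w \<in> N"
        then have wV: "w \<in> V" using NV by blast
        have dw: "dist w w0 < d1" "dist w w0 < d2" using wN unfolding N_def by (auto simp: dist_commute)
        have "G w \<in> ot_orbit K emb U (g w)" using GF[of w] Vg(4) wV by simp
        then obtain u' a' where ua': "(u', a') \<in> ot_group K U" "G w = ot_act emb u' a' (g w)"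
          unfolding orbit_iff by blast
        have "dist (g w) (g w0) < e" using d1 wV dw by blast
        moreover have "dist (ot_act emb u' a' (g w)) (ot_act emb u a (g w0)) < e"
          using d2 dw ua ua' by auto
        ultimately have "u' = u \<and> a' = a" using e(2) ua'(1) by blast
        then show "G w = ot_act emb u a (g w)" using ua' by simp
      qed
    qed
  qed
  have loc: "\<exists>N g c b. z \<in> N \<and> holo_on N g \<and> (\<forall>w\<in>N. G w $ k = c * g w $ k + b)" for z k
  proof -
    obtain N g u a where L: "z \<in> N" "holo_on N g" "\<forall>w\<in>N. G w = ot_act emb u a (g w)"
      using locf[of z] by blast
    show ?thesis
      by (rule exI[of _ N], rule exI[of _ g], rule exI[of _ "emb k u"], rule exI[of _ "emb k a"])
         (use L in \<open>auto simp: ot_act_def\<close>)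
  qed
  have Rconst: "G w1 $ i = G w0 $ i" if i: "i \<in> R" for w0 w1 i
  proof -
    let ?f = "\<lambda>\<zeta>. G (w0 + \<zeta> *s (w1 - w0)) $ i"
    have "?f holomorphic_on UNIV" by (rule line_holo[OF loc])
    moreover have "Im (?f z) > 0" for z using GD[of "w0 + z *s (w1 - w0)"] i unfolding ot_domain_def by blast
    ultimately have "?f 1 = ?f 0" by (rule cayley_const)
    then show ?thesis by simp
  qed
  have Gper: "G (w + l) = G w" if l: "l \<in> \<Lambda>" for w l
  proof -
    obtain V g where Vg: "w \<in> V" "holo_on V g" "g ` V \<subseteq> ot_domain R"
       "\<forall>w\<in>V. F w = ot_orbit K emb U (g w)" using lifts by blast
    have "G (w + l) \<in> ot_orbit K emb U (g w)" using GF[of "w + l"] per[OF l, of w] Vg by simp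
    then obtain u1 a1 where u1: "(u1, a1) \<in> ot_group K U" "G (w + l) = ot_act emb u1 a1 (g w)"
      unfolding orbit_iff by blast
    have "G w \<in> ot_orbit K emb U (g w)" using GF[of w] Vg by simp
    then obtain u2 a2 where u2: "(u2, a2) \<in> ot_group K U" "G w = ot_act emb u2 a2 (g w)"
      unfolding orbit_iff by blast
    have yD: "g w \<in> ot_domain R" using Vg by blast
    have "\<forall>i\<in>R. ot_act emb u1 a1 (g w) $ i = ot_act emb u2 a2 (g w) $ i"
      using Rconst[of _ w "w + l"] u1(2) u2(2) by simp
    then have "u1 = u2 \<and> a1 = a2" using act_unique[OF nf ed adm Rne yD u1(1) u2(1)] by blast
    then show ?thesis using u1 u2 by simp
  qed
  obtain B where B: "independent B" "span B = UNIV"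
      "\<Lambda> = {\<Sum>b\<in>B. of_int (c b) *\<^sub>R b | c. True}"
    using lat unfolding full_lattice_def by blast
  have finB: "finite B" using B(1) by (rule independent_imp_finite)
  define M where "M = (\<Sum>b\<in>B. norm b)"
  have Gbnd: "G w \<in> G ` cball 0 M" for w
  proof -
    have "w \<in> span B" using B(2) by simp
    then obtain x where x: "w = (\<Sum>b\<in>B. x b *\<^sub>R b)" using span_finite[OF finB] by auto
    define l where "l = (\<Sum>b\<in>B. of_int (floor (x b)) *\<^sub>R b)"
    have lL: "l \<in> \<Lambda>" unfolding B(3) l_def by (rule CollectI, rule exI[of _ "\<lambda>b. floor (x b)"]) simp
    define p where "p = (\<Sum>b\<in>B. (x b - of_int (floor (x b))) *\<^sub>R b)"
    have wpl: "w = p + l" unfolding x p_def l_def by (simp add: sum.distrib[symmetric] scaleR_diff_left)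
    have "norm p \<le> (\<Sum>b\<in>B. norm ((x b - of_int (floor (x b))) *\<^sub>R b))"
      unfolding p_def by (rule norm_sum)
    also have "\<dots> \<le> M" unfolding M_def
    proof (rule sum_mono)
      fix b assume "b \<in> B"
      have "\<bar>x b - of_int (floor (x b))\<bar> \<le> 1" by linarith
      then show "norm ((x b - of_int (floor (x b))) *\<^sub>R b) \<le> norm b"
        by (simp add: mult_left_le_one_le)
    qed
    finally have "p \<in> cball 0 M" by simp
    moreover have "G w = G p" using Gper[OF lL, of p] wpl by simp
    ultimately show ?thesis by blast
  qed
  have bG: "bounded (range G)"
  proof -
    have "compact (G ` cball 0 M)"
      by (rule compact_continuous_image[OF continuous_on_subset[OF Gc] compact_cball]) simp
    then have "bounded (G ` cball 0 M)" by (rule compact_imp_bounded)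
    moreover have "range G \<subseteq> G ` cball 0 M" using Gbnd by blast
    ultimately show ?thesis by (rule bounded_subset)
  qed
  have bGk: "bounded (range (\<lambda>w. G w $ k))" for k
  proof -
    obtain C where "\<forall>x\<in>range G. norm x \<le> C" using bG unfolding bounded_iff by blast
    then have C: "norm (G w) \<le> C" for w by blast
    have "norm (G w $ k) \<le> C" for w using Finite_Cartesian_Product.norm_nth_le[of "G w" k] C[of w] by linarith
    then have "\<forall>x\<in>range (\<lambda>w. G w $ k). norm x \<le> C" by blast
    then show ?thesis unfolding bounded_iff by blast
  qed
  have Gconst: "G w = G 0" for w
    using line_const[OF loc bGk] by (simp add: vec_eq_iff)
  have "F constant_on UNIV"
  proof (rule locally_constant_imp_constant[OF connected_UNIV])
    fix w0 :: "complex ^ 'd"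
    obtain N g u a where L: "open N" "w0 \<in> N" "\<forall>w\<in>N. F w = ot_orbit K emb U (g w)"
        "(u, a) \<in> ot_group K U" "\<forall>w\<in>N. G w = ot_act emb u a (g w)"
      using locf[of w0] by blast
    have "\<forall>w\<in>N. F w = F w0"
    proof
      fix w assume wN: "w \<in> N"
      have "ot_act emb u a (g w) = ot_act emb u a (g w0)"
        using L(5) wN L(2) Gconst[of w] Gconst[of w0] by metis
      then have "g w = g w0" by (rule act_inj[OF nf ed adm Rne L(4)])
      then show "F w = F w0" using L(3) wN L(2) by simp
    qed
    moreover have "openin (top_of_set UNIV) N" using L(1) by simp
    ultimately show "\<exists>T. openin (top_of_set UNIV) T \<and> w0 \<in> T \<and> (\<forall>x\<in>T. F x = F w0)"
      using L(2) by blast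
  qed
  then show ?thesis unfolding constant_on_def by blast
qed


theorem proposition4p1:
  fixes K :: "complex set" and R :: "'m::finite set" and emb :: "'m \<Rightarrow> complex \<Rightarrow> complex"
    and U :: "complex set" and \<Lambda> :: "(complex ^ 'd) set"
    and F :: "complex ^ 'd \<Rightarrow> (complex ^ 'm) set"
  assumes "number_field K"
    and "embedding_data K R emb"
    and "R \<noteq> {}" and "R \<noteq> UNIV"
    and "admissible K R emb U"
    and "full_lattice \<Lambda>"
    and "holo_map_torus_OT \<Lambda> K R emb U F"
  shows "\<exists>c. \<forall>z. F z = c"
  using main[OF assms] .

end
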